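(* Let $X=x_1x_2\dots$ and $Y=y_1y_2\dots$ be independent i.i.d. sequences uniform on $\{B,b,R,r\}$. Then almost surely, for every $r\ge0$ the combinatorial ball of radius $r$ around the root of $T_+(x_1\dots x_m)\cup T_-(y_1\dots y_m)$ does not depend on $m$ for all sufficiently large $m$; consequently the limit triangulation $T_+(X)\cup T_-(Y)$ is well defined and locally finite, and it has exactly one end.
   Context: Necklace construction (Sheffield). Given a finite word $X=x_1\dots x_n$ in $\{B,b,R,r\}$, build inductively disc triangulations $D_0\subset\dots\subset D_n$ in the closed upper half-plane with blue/red vertices and an active edge with blue endpoint $b_j$ and red endpoint $r_j$; initially non-positive integers are blue, positive integers red, $b_0=0,r_0=1$. Step according to $x_{j+1}$: (B) new blue vertex $b_{j+1}$, triangle $(b_j,r_j,b_{j+1})$, $r_{j+1}=r_j$; (R) new red vertex $r_{j+1}$, triangle $(b_j,r_j,r_{j+1})$, $b_{j+1}=b_j$; (b) $b_{j+1}$ = counterclockwise boundary neighbour of $b_j$ (or $m-1$, adding edge $[m-1,m]$, if $b_j=m\in\mathbb Z$), triangle $(b_{j+1},b_j,r_j)$, $r_{j+1}=r_j$; (r) $r_{j+1}$ = clockwise boundary neighbour of $r_j$ (or $m+1$, adding $[m,m+1]$, if $r_j=m\in\mathbb Z$), triangle $(b_j,r_j,r_{j+1})$, $b_{j+1}=b_j$. $T_+(X)$ is $D_n$ rooted at the first triangle constructed; $T_-(Y)$ is the analogous construction in the lower half-plane; $T_+(\cdot)\cup T_-(\cdot)$ denotes the two pieces glued along the real line, rooted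 at the root of the upper piece. Combinatorial balls: $B_0$ is the root vertex, $B_{r+1}$ is all triangles incident to a vertex of $B_r$ with their vertices and edges. A triangulation has one end if the complement of every finite subgraph has exactly one infinite connected component. *)

theory Defs
  imports "HOL-Probability.Probability"
begin

datatype letter = LB | Lb | LR | Lr
  (* LB = B (new blue), Lb = b (blue boundary move), LR = R (new red), Lr = r (red boundary move) *)

text \<open>Vertices: integers on the real line (Z m), new vertices of the upper piece
  (U j, created at step j), new vertices of the lower piece (D j, created at step j).\<close>
datatype vtx = Z int | U nat | D nat

text \<open>State of the construction: the boundary arc of the current disc is encoded by
  two stacks.  Blue side: leftmost real vertex L and the list of new (non-real)
  blue vertices on the arc above it (top = head); red side: rightmost real vertex R
  and list of new red vertices on the arc.  The active edge joins the tops.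
  The last component is the list of triangles in order of construction.\<close>
type_synonym nstate = "int \<times> vtx list \<times> int \<times> vtx list \<times> (vtx \<times> vtx \<times> vtx) list"

definition top_of :: "int \<Rightarrow> vtx list \<Rightarrow> vtx" where
  "top_of m vs = (if vs = [] then Z m else hd vs)"

fun step :: "(nat \<Rightarrow> vtx) \<Rightarrow> nat \<Rightarrow> letter \<Rightarrow> nstate \<Rightarrow> nstate" where
  "step mk j x (L, bs, R, rs, ts) =
    (let b = top_of L bs; r = top_of R rs; v = mk (Suc j) in
     case x of
       LB \<Rightarrow> (L, v # bs, R, rs, ts @ [(b, r, v)])
     | LR \<Rightarrow> (L, bs, R, v # rs, ts @ [(b, r, v)])
     | Lb \<Rightarrow> (let L' = (if bs = [] then L - 1 else L); bs' = tl bs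
              in (L', bs', R, rs, ts @ [(top_of L' bs', b, r)]))
     | Lr \<Rightarrow> (let R' = (if rs = [] then R + 1 else R); rs' = tl rs
              in (L, bs, R', rs', ts @ [(b, r, top_of R' rs')])))"

text \<open>State after the first n letters w 0, ..., w (n-1) (i.e. x_1 ... x_n).\<close>
fun nstate :: "(nat \<Rightarrow> vtx) \<Rightarrow> (nat \<Rightarrow> letter) \<Rightarrow> nat \<Rightarrow> nstate" where
  "nstate mk w 0 = (0, [], 1, [], [])"
| "nstate mk w (Suc n) = step mk n (w n) (nstate mk w n)"

definition tris_of :: "nstate \<Rightarrow> (vtx \<times> vtx \<times> vtx) list" where
  "tris_of s = snd (snd (snd (snd s)))"

text \<open>A triangle is identified by (upper piece?, index of construction step) and carries
  its three vertices.\<close>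
type_synonym tri = "(bool \<times> nat) \<times> (vtx \<times> vtx \<times> vtx)"

fun tverts :: "tri \<Rightarrow> vtx set" where
  "tverts (_, (a, b, c)) = {a, b, c}"

text \<open>T_+(x_1..x_m) \<union> T_-(y_1..y_m), glued along the real line (shared vertices Z m).\<close>
definition glued :: "(nat \<Rightarrow> letter) \<Rightarrow> (nat \<Rightarrow> letter) \<Rightarrow> nat \<Rightarrow> tri set" where
  "glued X Y m =
     {((True, j), tris_of (nstate U X m) ! j) | j. j < m} \<union>
     {((False, j), tris_of (nstate D Y m) ! j) | j. j < m}"

definition glued_lim :: "(nat \<Rightarrow> letter) \<Rightarrow> (nat \<Rightarrow> letter) \<Rightarrow> tri set" where
  "glued_lim X Y = (\<Union>m. glued X Y m)"

definition root_vtx :: vtx where "root_vtx = Z 0"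

fun comb_ball :: "tri set \<Rightarrow> nat \<Rightarrow> vtx set \<times> tri set" where
  "comb_ball T 0 = ({root_vtx}, {})"
| "comb_ball T (Suc r) =
    (let Ts = {t \<in> T. tverts t \<inter> fst (comb_ball T r) \<noteq> {}} in (\<Union> (tverts ` Ts), Ts))"

definition locally_finite :: "tri set \<Rightarrow> bool" where
  "locally_finite T \<longleftrightarrow> (\<forall>v. finite {t \<in> T. v \<in> tverts t})"

definition tri_vertices :: "tri set \<Rightarrow> vtx set" where
  "tri_vertices T = \<Union> (tverts ` T)"

definition tri_adj :: "tri set \<Rightarrow> vtx rel" where
  "tri_adj T = {(u, v). u \<noteq> v \<and> (\<exists>t\<in>T. u \<in> tverts t \<and> v \<in> tverts t)}"

definition components_minus :: "tri set \<Rightarrow> vtx set \<Rightarrow> vtx set set" where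
  "components_minus T K =
     (let S = tri_vertices T - K in {(Restr (tri_adj T) S)\<^sup>* `` {v} | v. v \<in> S})"

definition one_ended :: "tri set \<Rightarrow> bool" where
  "one_ended T \<longleftrightarrow>
     (\<forall>K. finite K \<longrightarrow> (\<exists>!C. C \<in> components_minus T K \<and> infinite C))"

definition unif4 :: "letter measure" where
  "unif4 = measure_pmf (pmf_of_set {LB, Lb, LR, Lr})"

end

theory Submission imports Defs begin


definition Lf :: "(nat \<Rightarrow> vtx) \<Rightarrow> (nat \<Rightarrow> letter) \<Rightarrow> nat \<Rightarrow> int" where "Lf mk w n = fst (nstate mk w n)"
definition bsf :: "(nat \<Rightarrow> vtx) \<Rightarrow> (nat \<Rightarrow> letter) \<Rightarrow> nat \<Rightarrow> vtx list" where "bsf mk w n = fst (snd (nstate mk w n))"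
definition Rf :: "(nat \<Rightarrow> vtx) \<Rightarrow> (nat \<Rightarrow> letter) \<Rightarrow> nat \<Rightarrow> int" where "Rf mk w n = fst (snd (snd (nstate mk w n)))"
definition rsf :: "(nat \<Rightarrow> vtx) \<Rightarrow> (nat \<Rightarrow> letter) \<Rightarrow> nat \<Rightarrow> vtx list" where "rsf mk w n = fst (snd (snd (snd (nstate mk w n))))"
definition tsf :: "(nat \<Rightarrow> vtx) \<Rightarrow> (nat \<Rightarrow> letter) \<Rightarrow> nat \<Rightarrow> (vtx \<times> vtx \<times> vtx) list" where "tsf mk w n = tris_of (nstate mk w n)"

definition newtri :: "(nat \<Rightarrow> vtx) \<Rightarrow> (nat \<Rightarrow> letter) \<Rightarrow> nat \<Rightarrow> vtx \<times> vtx \<times> vtx" where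
 "newtri mk w n = (let b = top_of (Lf mk w n) (bsf mk w n); r = top_of (Rf mk w n) (rsf mk w n) in
   case w n of LB \<Rightarrow> (b, r, mk (Suc n)) | LR \<Rightarrow> (b, r, mk (Suc n))
   | Lb \<Rightarrow> (top_of (Lf mk w (Suc n)) (bsf mk w (Suc n)), b, r)
   | Lr \<Rightarrow> (b, r, top_of (Rf mk w (Suc n)) (rsf mk w (Suc n))))"

lemma nstate_eq: "nstate mk w n = (Lf mk w n, bsf mk w n, Rf mk w n, rsf mk w n, tsf mk w n)"
  by (simp add: Lf_def bsf_def Rf_def rsf_def tsf_def tris_of_def)

lemma Lf_0[simp]: "Lf mk w 0 = 0" and bsf_0[simp]: "bsf mk w 0 = []" and Rf_0[simp]: "Rf mk w 0 = 1"
  and rsf_0[simp]: "rsf mk w 0 = []" and tsf_0[simp]: "tsf mk w 0 = []"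
  by (simp_all add: Lf_def bsf_def Rf_def rsf_def tsf_def tris_of_def)

lemma Lf_Suc: "Lf mk w (Suc n) = (if w n = Lb \<and> bsf mk w n = [] then Lf mk w n - 1 else Lf mk w n)"
  apply (subst Lf_def) apply (simp only: nstate.simps) apply (subst nstate_eq)
  by (cases "w n") (simp_all add: Let_def)
lemma bsf_Suc: "bsf mk w (Suc n) = (case w n of LB \<Rightarrow> mk (Suc n) # bsf mk w n | Lb \<Rightarrow> tl (bsf mk w n) | _ \<Rightarrow> bsf mk w n)"
  apply (subst bsf_def) apply (simp only: nstate.simps) apply (subst nstate_eq)
  by (cases "w n") (simp_all add: Let_def)
lemma Rf_Suc: "Rf mk w (Suc n) = (if w n = Lr \<and> rsf mk w n = [] then Rf mk w n + 1 else Rf mk w n)"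
  apply (subst Rf_def) apply (simp only: nstate.simps) apply (subst nstate_eq)
  by (cases "w n") (simp_all add: Let_def)
lemma rsf_Suc: "rsf mk w (Suc n) = (case w n of LR \<Rightarrow> mk (Suc n) # rsf mk w n | Lr \<Rightarrow> tl (rsf mk w n) | _ \<Rightarrow> rsf mk w n)"
  apply (subst rsf_def) apply (simp only: nstate.simps) apply (subst nstate_eq)
  by (cases "w n") (simp_all add: Let_def)
lemma tsf_Suc: "tsf mk w (Suc n) = tsf mk w n @ [newtri mk w n]"
  apply (subst tsf_def) apply (simp only: nstate.simps) apply (subst nstate_eq)
  by (cases "w n") (simp_all add: Let_def newtri_def tris_of_def Lf_Suc bsf_Suc Rf_Suc rsf_Suc)

lemma length_tsf[simp]: "length (tsf mk w n) = n"
  by (induct n) (simp_all add: tsf_Suc)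
lemma tsf_nth: "j < n \<Longrightarrow> tsf mk w n ! j = newtri mk w j"
proof (induct n)
  case (Suc n) then show ?case by (cases "j = n") (simp_all add: tsf_Suc nth_append)
qed simp

fun fb :: "letter \<Rightarrow> int" where "fb LB = 1" | "fb Lb = -1" | "fb LR = 0" | "fb Lr = 0"
fun fr :: "letter \<Rightarrow> int" where "fr LB = 0" | "fr Lb = 0" | "fr LR = 1" | "fr Lr = -1"

lemma blue_counter: "Lf mk w n + int (length (bsf mk w n)) = (\<Sum>k<n. fb (w k))"
proof (induct n)
  case (Suc n) then show ?case
    by (cases "w n"; cases "bsf mk w n") (simp_all add: Lf_Suc bsf_Suc)
qed simp

lemma red_counter: "Rf mk w n - int (length (rsf mk w n)) = 1 - (\<Sum>k<n. fr (w k))"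
proof (induct n)
  case (Suc n) then show ?case
    by (cases "w n"; cases "rsf mk w n") (simp_all add: Rf_Suc rsf_Suc)
qed simp

lemma Lf_step: "Lf mk w (Suc n) \<le> Lf mk w n" "Lf mk w n - 1 \<le> Lf mk w (Suc n)"
  by (simp_all add: Lf_Suc)
lemma Rf_step: "Rf mk w n \<le> Rf mk w (Suc n)" "Rf mk w (Suc n) \<le> Rf mk w n + 1"
  by (simp_all add: Rf_Suc)

lemma Lf_mono: "m \<le> n \<Longrightarrow> Lf mk w n \<le> Lf mk w m"
proof (induct n)
  case (Suc n) then show ?case using Lf_step(1)[of mk w n] by (cases "m = Suc n") auto
qed simp
lemma Rf_mono: "m \<le> n \<Longrightarrow> Rf mk w m \<le> Rf mk w n"
proof (induct n)
  case (Suc n) then show ?case using Rf_step(1)[of mk w n] by (cases "m = Suc n") auto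
qed simp

lemma Lf_le0: "Lf mk w n \<le> 0" using Lf_mono[of 0 n mk w] by simp
lemma Rf_ge1: "1 \<le> Rf mk w n" using Rf_mono[of 0 n mk w] by simp

lemma bsf_new: "set (bsf mk w n) \<subseteq> {mk (Suc i) | i. i < n \<and> w i = LB}"
proof (induct n)
  case (Suc n)
  have "set (bsf mk w (Suc n)) \<subseteq> set (bsf mk w n) \<union> (if w n = LB then {mk (Suc n)} else {})"
    by (cases "w n"; cases "bsf mk w n") (auto simp: bsf_Suc)
  then show ?case using Suc by (auto split: if_splits; blast intro: less_SucI)
qed simp
lemma rsf_new: "set (rsf mk w n) \<subseteq> {mk (Suc i) | i. i < n \<and> w i = LR}"
proof (induct n)
  case (Suc n)
  have "set (rsf mk w (Suc n)) \<subseteq> set (rsf mk w n) \<union> (if w n = LR then {mk (Suc n)} else {})"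
    by (cases "w n"; cases "rsf mk w n") (auto simp: rsf_Suc)
  then show ?case using Suc by (auto split: if_splits; blast intro: less_SucI)
qed simp

lemma bsf_G: "t \<le> j \<Longrightarrow> set (bsf mk w j) \<subseteq> set (bsf mk w t) \<union> {mk (Suc i) | i. t \<le> i \<and> i < j}"
proof (induct j)
  case (Suc j)
  show ?case
  proof (cases "t = Suc j")
    case False
    with Suc have "set (bsf mk w j) \<subseteq> set (bsf mk w t) \<union> {mk (Suc i) | i. t \<le> i \<and> i < j}" by auto
    moreover have "set (bsf mk w (Suc j)) \<subseteq> set (bsf mk w j) \<union> {mk (Suc j)}"
      by (cases "w j"; cases "bsf mk w j") (auto simp: bsf_Suc)
    ultimately show ?thesis using False Suc(2) by fastforce
  qed simp
qed simp
lemma rsf_G: "t \<le> j \<Longrightarrow> set (rsf mk w j) \<subseteq> set (rsf mk w t) \<union> {mk (Suc i) | i. t \<le> i \<and> i < j}"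
proof (induct j)
  case (Suc j)
  show ?case
  proof (cases "t = Suc j")
    case False
    with Suc have "set (rsf mk w j) \<subseteq> set (rsf mk w t) \<union> {mk (Suc i) | i. t \<le> i \<and> i < j}" by auto
    moreover have "set (rsf mk w (Suc j)) \<subseteq> set (rsf mk w j) \<union> {mk (Suc j)}"
      by (cases "w j"; cases "rsf mk w j") (auto simp: rsf_Suc)
    ultimately show ?thesis using False Suc(2) by fastforce
  qed simp
qed simp

lemma Ldec: "Lf mk w (Suc n) < Lf mk w n \<Longrightarrow> bsf mk w (Suc n) = []"
  by (cases "w n"; cases "bsf mk w n") (simp_all add: Lf_Suc bsf_Suc)
lemma Rinc: "Rf mk w n < Rf mk w (Suc n) \<Longrightarrow> rsf mk w (Suc n) = []"
  by (cases "w n"; cases "rsf mk w n") (simp_all add: Rf_Suc rsf_Suc)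

lemma L_drop_exists: "n \<le> j \<Longrightarrow> Lf mk w j < Lf mk w n \<Longrightarrow> \<exists>i. n \<le> i \<and> i < j \<and> Lf mk w (Suc i) < Lf mk w i"
proof (induct j)
  case (Suc j)
  show ?case
  proof (cases "Lf mk w (Suc j) < Lf mk w j")
    case True then show ?thesis using Suc by (cases "n = Suc j") (auto intro!: exI[of _ j])
  next
    case False
    then have "Lf mk w j < Lf mk w n" using Suc(3) Lf_step[of mk w j] by auto
    moreover have "n \<le> j" using Suc(2,3) by (cases "n = Suc j") auto
    ultimately show ?thesis using Suc(1) by force
  qed
qed simp
lemma R_rise_exists: "n \<le> j \<Longrightarrow> Rf mk w n < Rf mk w j \<Longrightarrow> \<exists>i. n \<le> i \<and> i < j \<and> Rf mk w i < Rf mk w (Suc i)"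
proof (induct j)
  case (Suc j)
  show ?case
  proof (cases "Rf mk w j < Rf mk w (Suc j)")
    case True then show ?thesis using Suc by (cases "n = Suc j") (auto intro!: exI[of _ j])
  next
    case False
    then have "Rf mk w n < Rf mk w j" using Suc(3) Rf_step[of mk w j] by auto
    moreover have "n \<le> j" using Suc(2,3) by (cases "n = Suc j") auto
    ultimately show ?thesis using Suc(1) by force
  qed
qed simp

definition blue where "blue mk w n = insert (Z (Lf mk w n)) (set (bsf mk w n))"
definition red where "red mk w n = insert (Z (Rf mk w n)) (set (rsf mk w n))"
definition arcs where "arcs mk w n = blue mk w n \<union> red mk w n"

definition okmk :: "(nat \<Rightarrow> vtx) \<Rightarrow> bool" where "okmk mk \<longleftrightarrow> inj mk \<and> (\<forall>k m. mk k \<noteq> Z m)"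

lemma okmk_U: "okmk U" and okmk_D: "okmk D" by (auto simp: okmk_def inj_def)

lemma Z_notin_bsf: "okmk mk \<Longrightarrow> Z m \<notin> set (bsf mk w n)"
  proof
  assume ok: "okmk mk" and z: "Z m \<in> set (bsf mk w n)"
  with bsf_new[of mk w n] obtain i where "Z m = mk (Suc i)" by blast
  with ok show False unfolding okmk_def by metis
qed
lemma Z_notin_rsf: "okmk mk \<Longrightarrow> Z m \<notin> set (rsf mk w n)"
  proof
  assume ok: "okmk mk" and z: "Z m \<in> set (rsf mk w n)"
  with rsf_new[of mk w n] obtain i where "Z m = mk (Suc i)" by blast
  with ok show False unfolding okmk_def by metis
qed

lemma blue_gone:
  assumes ok: "okmk mk" and nj: "n \<le> j" and L: "Lf mk w j < Lf mk w n" and jj: "j \<le> j'"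
  shows "blue mk w j' \<inter> blue mk w n = {}"
proof -
  obtain i where i: "n \<le> i" "i < j" "Lf mk w (Suc i) < Lf mk w i" using L_drop_exists[OF nj L] by blast
  have e: "bsf mk w (Suc i) = []" using Ldec[OF i(3)] .
  have s1: "set (bsf mk w j') \<subseteq> {mk (Suc i') | i'. Suc i \<le> i'}"
    using bsf_G[of "Suc i" j' mk w] e i jj by auto
  have s2: "set (bsf mk w n) \<subseteq> {mk (Suc i') | i'. i' < n}" using bsf_new[of mk w n] by auto
  have Lj: "Lf mk w j' < Lf mk w n" using Lf_mono[OF jj, of mk w] L by simp
  from ok have inj: "inj mk" and nz: "\<And>k m. mk k \<noteq> Z m" by (auto simp: okmk_def)
  have d: "set (bsf mk w j') \<inter> set (bsf mk w n) = {}"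
  proof (rule ccontr)
    assume "set (bsf mk w j') \<inter> set (bsf mk w n) \<noteq> {}"
    then obtain x where "x \<in> set (bsf mk w j')" "x \<in> set (bsf mk w n)" by blast
    with s1 s2 obtain a b where "x = mk (Suc a)" "Suc i \<le> a" "x = mk (Suc b)" "b < n" by blast
    with inj i(1) show False by (auto dest: injD)
  qed
  show ?thesis unfolding blue_def using d Lj Z_notin_bsf[OF ok] by auto
qed

lemma red_gone:
  assumes ok: "okmk mk" and nj: "n \<le> j" and R: "Rf mk w n < Rf mk w j" and jj: "j \<le> j'"
  shows "red mk w j' \<inter> red mk w n = {}"
proof -
  obtain i where i: "n \<le> i" "i < j" "Rf mk w i < Rf mk w (Suc i)" using R_rise_exists[OF nj R] by blast
  have e: "rsf mk w (Suc i) = []" using Rinc[OF i(3)] .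
  have s1: "set (rsf mk w j') \<subseteq> {mk (Suc i') | i'. Suc i \<le> i'}"
    using rsf_G[of "Suc i" j' mk w] e i jj by auto
  have s2: "set (rsf mk w n) \<subseteq> {mk (Suc i') | i'. i' < n}" using rsf_new[of mk w n] by auto
  have Rj: "Rf mk w n < Rf mk w j'" using Rf_mono[OF jj, of mk w] R by simp
  from ok have inj: "inj mk" and nz: "\<And>k m. mk k \<noteq> Z m" by (auto simp: okmk_def)
  have d: "set (rsf mk w j') \<inter> set (rsf mk w n) = {}"
  proof (rule ccontr)
    assume "set (rsf mk w j') \<inter> set (rsf mk w n) \<noteq> {}"
    then obtain x where "x \<in> set (rsf mk w j')" "x \<in> set (rsf mk w n)" by blast
    with s1 s2 obtain a b where "x = mk (Suc a)" "Suc i \<le> a" "x = mk (Suc b)" "b < n" by blast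
    with inj i(1) show False by (auto dest: injD)
  qed
  show ?thesis unfolding red_def using d Rj Z_notin_rsf[OF ok] by auto
qed

lemma blue_red_disj:
  assumes ok: "okmk mk" shows "blue mk w n \<inter> red mk w m = {}"
proof -
  from ok have inj: "inj mk" and nz: "\<And>k m. mk k \<noteq> Z m" by (auto simp: okmk_def)
  have s1: "set (bsf mk w n) \<subseteq> {mk (Suc i) | i. w i = LB}" using bsf_new[of mk w n] by auto
  have s2: "set (rsf mk w m) \<subseteq> {mk (Suc i) | i. w i = LR}" using rsf_new[of mk w m] by auto
  have d: "set (bsf mk w n) \<inter> set (rsf mk w m) = {}"
  proof (rule ccontr)
    assume "set (bsf mk w n) \<inter> set (rsf mk w m) \<noteq> {}"
    then obtain x where "x \<in> set (bsf mk w n)" "x \<in> set (rsf mk w m)" by blast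
    with s1 s2 obtain a b where "x = mk (Suc a)" "w a = LB" "x = mk (Suc b)" "w b = LR" by blast
    with inj show False by (auto dest: injD)
  qed
  have "Lf mk w n \<noteq> Rf mk w m" using Lf_le0[of mk w n] Rf_ge1[of mk w m] by simp
  then show ?thesis unfolding blue_def red_def using d Z_notin_rsf[OF ok] Z_notin_bsf[OF ok] by auto
qed

definition goodw :: "(nat \<Rightarrow> letter) \<Rightarrow> bool" where
  "goodw w \<longleftrightarrow> (\<forall>a. \<exists>n. (\<Sum>k<n. fb (w k)) < a) \<and> (\<forall>a. \<exists>n. (\<Sum>k<n. fr (w k)) < a)"

lemma good_L: assumes "goodw w" shows "\<exists>n. Lf mk w n < a"
proof -
  obtain n where "(\<Sum>k<n. fb (w k)) < a" using assms by (auto simp: goodw_def)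
  then show ?thesis using blue_counter[of mk w n] by (intro exI[of _ n]) simp
qed
lemma good_R: assumes "goodw w" shows "\<exists>n. a < Rf mk w n"
proof -
  obtain n where "(\<Sum>k<n. fr (w k)) < 1 - a" using assms by (auto simp: goodw_def)
  then show ?thesis using red_counter[of mk w n] by (intro exI[of _ n]) simp
qed

lemma eventually_off:
  assumes ok: "okmk mk" and g: "goodw w"
  shows "\<exists>N. \<forall>n\<ge>N. v \<notin> arcs mk w n"
proof (cases "\<exists>n0. v \<in> blue mk w n0")
  case True
  then obtain n0 where n0: "v \<in> blue mk w n0" by blast
  obtain j where j: "Lf mk w j < Lf mk w n0" using good_L[OF g] by blast
  have nj: "n0 \<le> j" using Lf_mono[of j n0 mk w] j by (cases "n0 \<le> j") auto
  show ?thesis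
  proof (intro exI allI impI)
    fix n assume "j \<le> n"
    then have "v \<notin> blue mk w n" using blue_gone[OF ok nj j, of n] n0 by auto
    moreover have "v \<notin> red mk w n" using blue_red_disj[OF ok, of w n0 n] n0 by auto
    ultimately show "v \<notin> arcs mk w n" by (simp add: arcs_def)
  qed
next
  case False
  show ?thesis
  proof (cases "\<exists>n0. v \<in> red mk w n0")
    case True
    then obtain n0 where n0: "v \<in> red mk w n0" by blast
    obtain j where j: "Rf mk w n0 < Rf mk w j" using good_R[OF g] by blast
    have nj: "n0 \<le> j" using Rf_mono[of j n0 mk w] j by (cases "n0 \<le> j") auto
    show ?thesis
    proof (intro exI allI impI)
      fix n assume "j \<le> n"
      then have "v \<notin> red mk w n" using red_gone[OF ok nj j, of n] n0 by auto
      then show "v \<notin> arcs mk w n" using False by (simp add: arcs_def)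
    qed
  next
    case False2: False
    then show ?thesis using False by (auto simp: arcs_def)
  qed
qed


fun tv :: "vtx \<times> vtx \<times> vtx \<Rightarrow> vtx set" where "tv (a, b, c) = {a, b, c}"

definition cov :: "(vtx \<times> vtx \<times> vtx) list \<Rightarrow> vtx \<Rightarrow> vtx \<Rightarrow> bool" where
  "cov ts u v \<longleftrightarrow> u = v \<or> (\<exists>t\<in>set ts. u \<in> tv t \<and> v \<in> tv t)"

lemma cov_mono: "cov ts u v \<Longrightarrow> cov (ts @ xs) u v" by (auto simp: cov_def)
lemma cov_new: "u \<in> tv t \<Longrightarrow> v \<in> tv t \<Longrightarrow> cov (ts @ [t]) u v" by (auto simp: cov_def)
lemma cov_sym: "cov ts u v \<Longrightarrow> cov ts v u" by (auto simp: cov_def)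

definition bl where "bl mk w n = bsf mk w n @ [Z (Lf mk w n)]"
definition rl where "rl mk w n = rsf mk w n @ [Z (Rf mk w n)]"

lemma hd_bl: "hd (bl mk w n) = top_of (Lf mk w n) (bsf mk w n)"
  by (cases "bsf mk w n") (simp_all add: bl_def top_of_def)
lemma hd_rl: "hd (rl mk w n) = top_of (Rf mk w n) (rsf mk w n)"
  by (cases "rsf mk w n") (simp_all add: rl_def top_of_def)
lemma set_bl: "set (bl mk w n) = blue mk w n" by (auto simp: bl_def blue_def)
lemma set_rl: "set (rl mk w n) = red mk w n" by (auto simp: rl_def red_def)

definition TV where "TV ts = \<Union> (tv ` set ts)"

definition Inv where "Inv mk w n \<longleftrightarrow>
   successively (cov (tsf mk w n)) (bl mk w n) \<and> successively (cov (tsf mk w n)) (rl mk w n) \<and>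
   (n \<ge> 1 \<longrightarrow> cov (tsf mk w n) (hd (bl mk w n)) (hd (rl mk w n)) \<and> arcs mk w n \<subseteq> TV (tsf mk w n))"

lemma succ_tl: "successively P xs \<Longrightarrow> successively P (tl xs)"
  by (cases xs) (auto simp: successively_Cons)

lemma Inv_all: "Inv mk w n"
proof (induct n)
  case 0 then show ?case by (simp add: Inv_def bl_def rl_def)
next
  case (Suc n)
  let ?t = "newtri mk w n"
  let ?ts = "tsf mk w n"
  have ts: "tsf mk w (Suc n) = ?ts @ [?t]" by (rule tsf_Suc)
  from Suc have I1: "successively (cov ?ts) (bl mk w n)" and I2: "successively (cov ?ts) (rl mk w n)"
    and I3: "n \<ge> 1 \<Longrightarrow> cov ?ts (hd (bl mk w n)) (hd (rl mk w n))"
    and I4: "n \<ge> 1 \<Longrightarrow> arcs mk w n \<subseteq> TV ?ts" by (auto simp: Inv_def)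
  have J1: "successively (cov (?ts @ [?t])) (bl mk w n)" using I1 by (rule successively_mono) (rule cov_mono)
  have J2: "successively (cov (?ts @ [?t])) (rl mk w n)" using I2 by (rule successively_mono) (rule cov_mono)
  have J4: "arcs mk w n \<subseteq> TV (?ts @ [?t])"
  proof (cases "n = 0")
    case True
    have "arcs mk w n = {Z 0, Z 1}" using True by (auto simp: arcs_def blue_def red_def)
    moreover have "{Z 0, Z 1} \<subseteq> tv ?t" using True
      by (cases "w 0") (simp_all add: newtri_def top_of_def Let_def Lf_Suc bsf_Suc)
    ultimately show ?thesis by (auto simp: TV_def)
  next
    case False then show ?thesis using I4 by (auto simp: TV_def)
  qed
  have bt: "top_of (Lf mk w n) (bsf mk w n) \<in> tv ?t" and rt: "top_of (Rf mk w n) (rsf mk w n) \<in> tv ?t"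
    by (cases "w n"; simp add: newtri_def Let_def)+
  show ?case
  proof (cases "w n")
    case LB
    have bl': "bl mk w (Suc n) = mk (Suc n) # bl mk w n" and rl': "rl mk w (Suc n) = rl mk w n"
      using LB by (simp_all add: bl_def rl_def bsf_Suc Lf_Suc rsf_Suc Rf_Suc)
    have v: "mk (Suc n) \<in> tv ?t" using LB by (simp add: newtri_def Let_def)
    have "arcs mk w (Suc n) = insert (mk (Suc n)) (arcs mk w n)"
      using LB by (auto simp: arcs_def blue_def red_def bsf_Suc Lf_Suc rsf_Suc Rf_Suc)
    then show ?thesis using J1 J2 J4 v bt rt unfolding Inv_def ts bl' rl'
      by (auto simp: successively_Cons hd_bl hd_rl cov_new TV_def)
  next
    case LR
    have rl': "rl mk w (Suc n) = mk (Suc n) # rl mk w n" and bl': "bl mk w (Suc n) = bl mk w n"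
      using LR by (simp_all add: bl_def rl_def bsf_Suc Lf_Suc rsf_Suc Rf_Suc)
    have v: "mk (Suc n) \<in> tv ?t" using LR by (simp add: newtri_def Let_def)
    have "arcs mk w (Suc n) = insert (mk (Suc n)) (arcs mk w n)"
      using LR by (auto simp: arcs_def blue_def red_def bsf_Suc Lf_Suc rsf_Suc Rf_Suc)
    then show ?thesis using J1 J2 J4 v bt rt unfolding Inv_def ts bl' rl'
      by (auto simp: successively_Cons hd_bl hd_rl cov_new TV_def)
  next
    case Lb
    have rl': "rl mk w (Suc n) = rl mk w n"
      using Lb by (simp_all add: rl_def rsf_Suc Rf_Suc)
    have nb: "top_of (Lf mk w (Suc n)) (bsf mk w (Suc n)) \<in> tv ?t" using Lb by (simp add: newtri_def Let_def)
    have S1: "successively (cov (?ts @ [?t])) (bl mk w (Suc n))"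
    proof (cases "bsf mk w n")
      case Nil then show ?thesis using Lb by (simp add: bl_def bsf_Suc)
    next
      case (Cons x xs)
      then have "bl mk w (Suc n) = tl (bl mk w n)" using Lb by (simp add: bl_def bsf_Suc Lf_Suc)
      then show ?thesis using J1 succ_tl by metis
    qed
    have A: "arcs mk w (Suc n) \<subseteq> insert (top_of (Lf mk w (Suc n)) (bsf mk w (Suc n))) (arcs mk w n)"
      using Lb by (cases "bsf mk w n") (auto simp: arcs_def blue_def red_def bsf_Suc Lf_Suc rsf_Suc Rf_Suc top_of_def)
    show ?thesis using S1 J2 J4 A nb rt unfolding Inv_def ts rl'
      by (auto simp: hd_bl hd_rl cov_new TV_def)
  next
    case Lr
    have bl': "bl mk w (Suc n) = bl mk w n"
      using Lr by (simp_all add: bl_def bsf_Suc Lf_Suc)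
    have nr: "top_of (Rf mk w (Suc n)) (rsf mk w (Suc n)) \<in> tv ?t" using Lr by (simp add: newtri_def Let_def)
    have S2: "successively (cov (?ts @ [?t])) (rl mk w (Suc n))"
    proof (cases "rsf mk w n")
      case Nil then show ?thesis using Lr by (simp add: rl_def rsf_Suc)
    next
      case (Cons x xs)
      then have "rl mk w (Suc n) = tl (rl mk w n)" using Lr by (simp add: rl_def rsf_Suc Rf_Suc)
      then show ?thesis using J2 succ_tl by metis
    qed
    have A: "arcs mk w (Suc n) \<subseteq> insert (top_of (Rf mk w (Suc n)) (rsf mk w (Suc n))) (arcs mk w n)"
      using Lr by (cases "rsf mk w n") (auto simp: arcs_def blue_def red_def bsf_Suc Lf_Suc rsf_Suc Rf_Suc top_of_def)
    show ?thesis using S2 J1 J4 A nr bt unfolding Inv_def ts bl'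
      by (auto simp: hd_bl hd_rl cov_new TV_def)
  qed
qed

lemma newtri_arcs: "tv (newtri mk w n) \<subseteq> arcs mk w n \<union> arcs mk w (Suc n)"
proof -
  have b: "top_of (Lf mk w n) (bsf mk w n) \<in> arcs mk w n" and r: "top_of (Rf mk w n) (rsf mk w n) \<in> arcs mk w n"
    by (auto simp: arcs_def blue_def red_def top_of_def)
  have b': "top_of (Lf mk w (Suc n)) (bsf mk w (Suc n)) \<in> arcs mk w (Suc n)" and r': "top_of (Rf mk w (Suc n)) (rsf mk w (Suc n)) \<in> arcs mk w (Suc n)"
    by (auto simp: arcs_def blue_def red_def top_of_def)
  have v: "w n = LB \<or> w n = LR \<Longrightarrow> mk (Suc n) \<in> arcs mk w (Suc n)"
    by (auto simp: arcs_def blue_def red_def bsf_Suc rsf_Suc)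
  show ?thesis using b r b' r' v by (cases "w n") (auto simp: newtri_def Let_def)
qed

lemma arc_share: "arcs mk w n \<inter> arcs mk w (Suc n) \<noteq> {}"
proof -
  have "top_of (Rf mk w n) (rsf mk w n) \<in> arcs mk w n \<inter> arcs mk w (Suc n)" if "w n = LB \<or> w n = Lb"
    using that by (auto simp: arcs_def red_def top_of_def rsf_Suc Rf_Suc)
  moreover have "top_of (Lf mk w n) (bsf mk w n) \<in> arcs mk w n \<inter> arcs mk w (Suc n)" if "w n = LR \<or> w n = Lr"
    using that by (auto simp: arcs_def blue_def top_of_def bsf_Suc Lf_Suc)
  ultimately show ?thesis by (cases "w n") auto
qed


lemma tverts_tv: "tverts (l, t) = tv t" by (cases t) auto
lemma finite_tv: "finite (tv t)" by (cases t) auto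
lemma finite_tverts: "finite (tverts t)" by (cases t) (auto simp: tverts_tv finite_tv)

lemma glued_eq: "glued X Y m = {((True, j), newtri U X j) | j. j < m} \<union> {((False, j), newtri D Y j) | j. j < m}"
  unfolding glued_def tsf_def[symmetric] by (auto simp: tsf_nth)

lemma glued_mono: "m \<le> m' \<Longrightarrow> glued X Y m \<subseteq> glued X Y m'"
  unfolding glued_eq by auto

lemma lim_eq: "glued_lim X Y = {((True, j), newtri U X j) | j. True} \<union> {((False, j), newtri D Y j) | j. True}"
  unfolding glued_lim_def glued_eq by blast

lemma ball_fin: assumes lf: "locally_finite T"
  shows "finite (fst (comb_ball T r)) \<and> finite (snd (comb_ball T r))"
proof (induct r)
  case 0 then show ?case by simp
next
  case (Suc r)
  let ?V = "fst (comb_ball T r)"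
  have eq: "{t \<in> T. tverts t \<inter> ?V \<noteq> {}} = (\<Union>v\<in>?V. {t \<in> T. v \<in> tverts t})" by auto
  have f: "finite {t \<in> T. tverts t \<inter> ?V \<noteq> {}}"
    unfolding eq using Suc lf by (auto simp: locally_finite_def)
  then show ?case using f by (simp add: Let_def finite_tverts)
qed

lemma ball_stab: assumes sub: "T' \<subseteq> T" and c: "\<forall>r'\<le>r. snd (comb_ball T r') \<subseteq> T'"
  shows "comb_ball T' r = comb_ball T r"
  using c
proof (induct r)
  case 0 then show ?case by simp
next
  case (Suc r)
  then have IH: "comb_ball T' r = comb_ball T r" by auto
  have s: "{t \<in> T. tverts t \<inter> fst (comb_ball T r) \<noteq> {}} \<subseteq> T'"
  proof -
    have "snd (comb_ball T (Suc r)) \<subseteq> T'" using Suc(2) by blast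
    then show ?thesis by (simp add: Let_def)
  qed
  have "{t \<in> T'. tverts t \<inter> fst (comb_ball T r) \<noteq> {}} = {t \<in> T. tverts t \<inter> fst (comb_ball T r) \<noteq> {}}"
    using s sub by auto
  then show ?case by (simp add: Let_def IH)
qed

lemma fin_in_mono_union: "finite A \<Longrightarrow> A \<subseteq> (\<Union>m. G m) \<Longrightarrow> (\<And>m m'. m \<le> m' \<Longrightarrow> G m \<subseteq> G (m'::nat)) \<Longrightarrow> \<exists>M. A \<subseteq> G M"
proof (induct A rule: finite_induct)
  case empty then show ?case by simp
next
  case (insert x A)
  then obtain M where M: "A \<subseteq> G M" by auto
  obtain m where m: "x \<in> G m" using insert(4) by auto
  have "A \<subseteq> G (max M m)" "x \<in> G (max M m)" using M m insert(5)[of M "max M m"] insert(5)[of m "max M m"] by auto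
  then show ?case by blast
qed

lemma incident_bound:
  assumes "\<forall>n\<ge>N. v \<notin> arcs U X n \<and> v \<notin> arcs D Y n"
  shows "{t \<in> glued_lim X Y. v \<in> tverts t} \<subseteq> glued X Y N"
proof
  fix t assume t: "t \<in> {t \<in> glued_lim X Y. v \<in> tverts t}"
  then consider j where "t = ((True, j), newtri U X j)" "v \<in> tv (newtri U X j)"
    | j where "t = ((False, j), newtri D Y j)" "v \<in> tv (newtri D Y j)"
    unfolding lim_eq by (auto simp: tverts_tv)
  then show "t \<in> glued X Y N"
  proof cases
    case 1
    with newtri_arcs[of U X j] have "v \<in> arcs U X j \<or> v \<in> arcs U X (Suc j)" by auto
    then have "j < N" using assms by (metis le_SucI not_less)
    then show ?thesis using 1 unfolding glued_eq by auto
  next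
    case 2
    with newtri_arcs[of D Y j] have "v \<in> arcs D Y j \<or> v \<in> arcs D Y (Suc j)" by auto
    then have "j < N" using assms by (metis le_SucI not_less)
    then show ?thesis using 2 unfolding glued_eq by auto
  qed
qed

lemma finite_glued: "finite (glued X Y N)"
  unfolding glued_eq by auto

lemma both_off:
  assumes gX: "goodw X" and gY: "goodw Y"
  shows "\<exists>N. \<forall>n\<ge>N. v \<notin> arcs U X n \<and> v \<notin> arcs D Y n"
proof -
  obtain N1 where 1: "\<forall>n\<ge>N1. v \<notin> arcs U X n" using eventually_off[OF okmk_U gX] by blast
  obtain N2 where 2: "\<forall>n\<ge>N2. v \<notin> arcs D Y n" using eventually_off[OF okmk_D gY] by blast
  show ?thesis using 1 2 by (intro exI[of _ "max N1 N2"]) auto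
qed

lemma lf_lim: assumes "goodw X" "goodw Y" shows "locally_finite (glued_lim X Y)"
  unfolding locally_finite_def
proof
  fix v
  obtain N where "\<forall>n\<ge>N. v \<notin> arcs U X n \<and> v \<notin> arcs D Y n" using both_off[OF assms] by blast
  from incident_bound[OF this] show "finite {t \<in> glued_lim X Y. v \<in> tverts t}"
    by (rule finite_subset) (rule finite_glued)
qed

lemma balls_ok: assumes "goodw X" "goodw Y"
  shows "\<forall>r. \<exists>M. \<forall>m\<ge>M. comb_ball (glued X Y m) r = comb_ball (glued X Y M) r
                     \<and> comb_ball (glued X Y m) r = comb_ball (glued_lim X Y) r"
proof
  fix r
  let ?T = "glued_lim X Y"
  have lf: "locally_finite ?T" by (rule lf_lim[OF assms])
  let ?A = "\<Union>r'\<in>{..r}. snd (comb_ball ?T r')"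
  have fA: "finite ?A" using ball_fin[OF lf] by auto
  have sA: "?A \<subseteq> (\<Union>m. glued X Y m)"
  proof -
    have "snd (comb_ball ?T r') \<subseteq> ?T" for r'
      by (cases r') (auto simp: Let_def)
    then show ?thesis unfolding glued_lim_def by blast
  qed
  obtain M where M: "?A \<subseteq> glued X Y M" using fin_in_mono_union[OF fA sA glued_mono] by blast
  have *: "comb_ball (glued X Y m) r = comb_ball ?T r" if "M \<le> m" for m
  proof (rule ball_stab)
    show "glued X Y m \<subseteq> ?T" unfolding glued_lim_def by auto
    show "\<forall>r'\<le>r. snd (comb_ball ?T r') \<subseteq> glued X Y m"
      using M glued_mono[OF that, of X Y] by auto
  qed
  show "\<exists>M. \<forall>m\<ge>M. comb_ball (glued X Y m) r = comb_ball (glued X Y M) r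
                     \<and> comb_ball (glued X Y m) r = comb_ball ?T r"
    using * by (intro exI[of _ M]) auto
qed


lemma rtr_sym: "sym R \<Longrightarrow> (a, b) \<in> R\<^sup>* \<Longrightarrow> (b, a) \<in> R\<^sup>*"
  by (metis rtrancl_converseI sym_conv_converse_eq)

lemma rtr_in_S: "(a, b) \<in> (Restr R S)\<^sup>* \<Longrightarrow> a \<in> S \<Longrightarrow> b \<in> S"
  by (induct rule: rtrancl_induct) auto

lemma chain_conn:
  assumes "successively P xs" "set xs \<subseteq> S'" "\<And>u v. P u v \<Longrightarrow> u \<in> S' \<Longrightarrow> v \<in> S' \<Longrightarrow> (u, v) \<in> E\<^sup>*" "sym E"
  shows "\<forall>u\<in>set xs. \<forall>v\<in>set xs. (u, v) \<in> E\<^sup>*"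
  using assms(1,2)
proof (induct xs)
  case Nil then show ?case by simp
next
  case (Cons x xs)
  show ?case
  proof (cases xs)
    case Nil then show ?thesis by simp
  next
    case (Cons y ys)
    with Cons.prems have P: "P x y" and s: "successively P xs" by auto
    have IH: "\<forall>u\<in>set xs. \<forall>v\<in>set xs. (u, v) \<in> E\<^sup>*" using Cons.hyps s Cons.prems by auto
    have xy: "(x, y) \<in> E\<^sup>*" using assms(3)[OF P] Cons.prems \<open>xs = y # ys\<close> by auto
    have yx: "(y, x) \<in> E\<^sup>*" using rtr_sym[OF assms(4) xy] .
    have yin: "y \<in> set xs" using \<open>xs = y # ys\<close> by simp
    have a: "(x, v) \<in> E\<^sup>*" if "v \<in> set xs" for v using xy IH yin that by (meson rtrancl_trans)
    have b: "(v, x) \<in> E\<^sup>*" if "v \<in> set xs" for v using yx IH yin that by (meson rtrancl_trans)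
    show ?thesis using a b IH by auto
  qed
qed

lemma arc_conn:
  assumes n: "1 \<le> n" and inT: "\<forall>t\<in>set (tsf mk w n). \<exists>l. (l, t) \<in> T" and sub: "arcs mk w n \<subseteq> S"
  shows "\<forall>u\<in>arcs mk w n. \<forall>v\<in>arcs mk w n. (u, v) \<in> (Restr (tri_adj T) S)\<^sup>*"
proof -
  let ?ts = "tsf mk w n"
  have I: "successively (cov ?ts) (bl mk w n)" "successively (cov ?ts) (rl mk w n)"
    "cov ?ts (hd (bl mk w n)) (hd (rl mk w n))"
    using Inv_all[of mk w n] n by (auto simp: Inv_def)
  have ne: "bl mk w n \<noteq> []" "rl mk w n \<noteq> []" by (auto simp: bl_def rl_def)
  have r: "successively (cov ?ts) (rev (bl mk w n))"
    using I(1) by (simp add: successively_mono cov_sym)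
  have S: "successively (cov ?ts) (rev (bl mk w n) @ rl mk w n)"
    using r I ne by (simp add: successively_append_iff last_rev)
  have set: "set (rev (bl mk w n) @ rl mk w n) = arcs mk w n" by (auto simp: set_bl set_rl arcs_def)
  have e: "(u, v) \<in> (Restr (tri_adj T) S)\<^sup>*" if "cov ?ts u v" "u \<in> S" "v \<in> S" for u v
  proof (cases "u = v")
    case False
    with that obtain t where t: "t \<in> set ?ts" "u \<in> tv t" "v \<in> tv t" by (auto simp: cov_def)
    obtain l where "(l, t) \<in> T" using inT t(1) by blast
    then have "(u, v) \<in> Restr (tri_adj T) S" using t that False by (auto simp: tri_adj_def tverts_tv intro!: bexI[of _ "(l, t)"])
    then show ?thesis by blast
  qed simp
  have "sym (Restr (tri_adj T) S)" by (auto simp: sym_def tri_adj_def)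
  from chain_conn[OF S _ e this] show ?thesis using sub set by auto
qed

lemma L_hits: "N \<le> j \<Longrightarrow> Lf mk w j \<le> m \<Longrightarrow> m \<le> Lf mk w N \<Longrightarrow> \<exists>n\<ge>N. n \<le> j \<and> Lf mk w n = m"
proof (induct j)
  case 0 then show ?case by auto
next
  case (Suc j)
  show ?case
  proof (cases "N = Suc j")
    case True then show ?thesis using Suc by (intro exI[of _ "Suc j"]) auto
  next
    case False
    then have Nj: "N \<le> j" using Suc by auto
    show ?thesis
    proof (cases "Lf mk w j \<le> m")
      case True then show ?thesis using Suc.hyps[OF Nj True Suc(4)] by auto
    next
      case False
      then have "Lf mk w (Suc j) = m" using Lf_step[of mk w j] Suc(3) by auto
      then show ?thesis using Nj by (intro exI[of _ "Suc j"]) auto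
    qed
  qed
qed

lemma L_reaches: assumes g: "goodw w" and m: "m \<le> Lf mk w N" shows "\<exists>n\<ge>N. Lf mk w n = m"
proof -
  obtain j where j: "Lf mk w j < m" using good_L[OF g] by blast
  have "N \<le> j" using Lf_mono[of j N mk w] j m by (cases "N \<le> j") auto
  then show ?thesis using L_hits[OF _ _ m, of j] j by auto
qed

lemma set_tsf: "set (tsf mk w n) = newtri mk w ` {..<n}"
  apply (auto simp: set_conv_nth tsf_nth image_def)
  by (metis tsf_nth)

lemma one_ended_lim: assumes gX: "goodw X" and gY: "goodw Y" shows "one_ended (glued_lim X Y)"
  unfolding one_ended_def
proof (intro allI impI)
  fix K :: "vtx set" assume fK: "finite K"
  let ?T = "glued_lim X Y"
  define S where "S = tri_vertices ?T - K"
  define R where "R = Restr (tri_adj ?T) S"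
  have symR: "sym R" by (auto simp: sym_def tri_adj_def R_def)
  obtain f where f: "\<forall>v. \<forall>n\<ge>f v. v \<notin> arcs U X n \<and> v \<notin> arcs D Y n"
    using both_off[OF gX gY] by metis
  define N where "N = Suc (\<Sum>v\<in>K. f v)"
  have N1: "1 \<le> N" by (simp add: N_def)
  have offK: "v \<notin> arcs U X n \<and> v \<notin> arcs D Y n" if "N \<le> n" "v \<in> K" for n v
  proof -
    have "f v \<le> (\<Sum>v\<in>K. f v)" using fK that(2) by (intro member_le_sum) auto
    then show ?thesis using f that(1) unfolding N_def by auto
  qed
  have inU: "\<forall>t\<in>set (tsf U X n). \<exists>l. (l, t) \<in> ?T" for n
    unfolding set_tsf lim_eq by auto
  have inD: "\<forall>t\<in>set (tsf D Y n). \<exists>l. (l, t) \<in> ?T" for n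
    unfolding set_tsf lim_eq by auto
  have TVU: "arcs U X n \<subseteq> tri_vertices ?T" if "1 \<le> n" for n
  proof -
    have "arcs U X n \<subseteq> TV (tsf U X n)" using Inv_all[of U X n] that by (simp add: Inv_def)
    moreover have "TV (tsf U X n) \<subseteq> tri_vertices ?T"
    proof
      fix x assume "x \<in> TV (tsf U X n)"
      then obtain j where j: "x \<in> tv (newtri U X j)" by (auto simp: TV_def set_tsf)
      have "((True, j), newtri U X j) \<in> ?T" by (auto simp: lim_eq)
      then show "x \<in> tri_vertices ?T" using j unfolding tri_vertices_def tverts_tv
        by (metis UN_I tverts_tv)
    qed
    ultimately show ?thesis by blast
  qed
  have TVD: "arcs D Y n \<subseteq> tri_vertices ?T" if "1 \<le> n" for n
  proof -
    have "arcs D Y n \<subseteq> TV (tsf D Y n)" using Inv_all[of D Y n] that by (simp add: Inv_def)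
    moreover have "TV (tsf D Y n) \<subseteq> tri_vertices ?T"
    proof
      fix x assume "x \<in> TV (tsf D Y n)"
      then obtain j where j: "x \<in> tv (newtri D Y j)" by (auto simp: TV_def set_tsf)
      have "((False, j), newtri D Y j) \<in> ?T" by (auto simp: lim_eq)
      then show "x \<in> tri_vertices ?T" using j unfolding tri_vertices_def tverts_tv
        by (metis UN_I tverts_tv)
    qed
    ultimately show ?thesis by blast
  qed
  have SU: "arcs U X n \<subseteq> S" if "N \<le> n" for n using TVU[of n] offK[OF that] that N1 by (auto simp: S_def)
  have SD: "arcs D Y n \<subseteq> S" if "N \<le> n" for n using TVD[of n] offK[OF that] that N1 by (auto simp: S_def)
  have cU: "\<forall>u\<in>arcs U X n. \<forall>v\<in>arcs U X n. (u, v) \<in> R\<^sup>*" if "N \<le> n" for n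
    unfolding R_def using arc_conn[OF _ inU SU[OF that]] that N1 by auto
  have cD: "\<forall>u\<in>arcs D Y n. \<forall>v\<in>arcs D Y n. (u, v) \<in> R\<^sup>*" if "N \<le> n" for n
    unfolding R_def using arc_conn[OF _ inD SD[OF that]] that N1 by auto
  define x0 where "x0 = Z (Lf U X N)"
  define y0 where "y0 = Z (Lf D Y N)"
  have x0a: "x0 \<in> arcs U X N" by (simp add: x0_def arcs_def blue_def)
  have y0a: "y0 \<in> arcs D Y N" by (simp add: y0_def arcs_def blue_def)
  have connU: "N \<le> n \<Longrightarrow> \<forall>u\<in>arcs U X n. (x0, u) \<in> R\<^sup>*" for n
  proof (induct n rule: dec_induct)
    case base then show ?case using cU[of N] x0a by auto
  next
    case (step n)
    obtain y where y: "y \<in> arcs U X n" "y \<in> arcs U X (Suc n)" using arc_share[of U X n] by blast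
    have "(x0, y) \<in> R\<^sup>*" using step(3) y(1) by auto
    then show ?case using cU[of "Suc n"] step(1) y(2) by (meson le_SucI rtrancl_trans)
  qed
  have connD: "N \<le> n \<Longrightarrow> \<forall>u\<in>arcs D Y n. (y0, u) \<in> R\<^sup>*" for n
  proof (induct n rule: dec_induct)
    case base then show ?case using cD[of N] y0a by auto
  next
    case (step n)
    obtain y where y: "y \<in> arcs D Y n" "y \<in> arcs D Y (Suc n)" using arc_share[of D Y n] by blast
    have "(y0, y) \<in> R\<^sup>*" using step(3) y(1) by auto
    then show ?case using cD[of "Suc n"] step(1) y(2) by (meson le_SucI rtrancl_trans)
  qed
  define m0 where "m0 = min (Lf U X N) (Lf D Y N)"
  obtain n1 where n1: "n1 \<ge> N" "Lf U X n1 = m0" using L_reaches[OF gX, of m0 U N] by (auto simp: m0_def)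
  obtain n2 where n2: "n2 \<ge> N" "Lf D Y n2 = m0" using L_reaches[OF gY, of m0 D N] by (auto simp: m0_def)
  have "(x0, Z m0) \<in> R\<^sup>*" using connU[OF n1(1)] n1(2) by (auto simp: arcs_def blue_def)
  moreover have "(y0, Z m0) \<in> R\<^sup>*" using connD[OF n2(1)] n2(2) by (auto simp: arcs_def blue_def)
  ultimately have xy: "(x0, y0) \<in> R\<^sup>*" using rtr_sym[OF symR] by (meson rtrancl_trans)
  have connD': "N \<le> n \<Longrightarrow> \<forall>u\<in>arcs D Y n. (x0, u) \<in> R\<^sup>*" for n
    using connD xy by (meson rtrancl_trans)
  define F where "F = (\<Union>n\<in>{..N}. arcs U X n \<union> arcs D Y n)"
  have fF: "finite F" unfolding F_def by (auto simp: arcs_def blue_def red_def)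
  have cover: "(x0, v) \<in> R\<^sup>* \<or> v \<in> F" if "v \<in> S" for v
  proof -
    from that obtain t where t: "t \<in> ?T" "v \<in> tverts t" by (auto simp: S_def tri_vertices_def)
    then consider j where "v \<in> tv (newtri U X j)" | j where "v \<in> tv (newtri D Y j)"
      unfolding lim_eq by (auto simp: tverts_tv)
    then show ?thesis
    proof cases
      case 1
      then obtain n where n: "v \<in> arcs U X n" using newtri_arcs[of U X j] by blast
      show ?thesis
      proof (cases "N \<le> n")
        case True then show ?thesis using connU n by blast
      next
        case False then show ?thesis using n unfolding F_def by auto
      qed
    next
      case 2
      then obtain n where n: "v \<in> arcs D Y n" using newtri_arcs[of D Y j] by blast
      show ?thesis
      proof (cases "N \<le> n")
        case True then show ?thesis using connD' n by blast
      next
        case False then show ?thesis using n unfolding F_def by auto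
      qed
    qed
  qed
  have x0S: "x0 \<in> S" using SU[of N] x0a by auto
  define C0 where "C0 = R\<^sup>* `` {x0}"
  have comps: "components_minus ?T K = {R\<^sup>* `` {v} | v. v \<in> S}"
    unfolding components_minus_def Let_def S_def R_def by simp
  have C0inf: "infinite C0"
  proof
    assume fin: "finite C0"
    define A where "A = Z -` C0"
    have fA: "finite A" unfolding A_def using fin by (rule finite_vimageI) (simp add: inj_def)
    define b where "b = Min (insert 0 A)"
    have b: "\<forall>m\<in>A. b \<le> m" using fA by (auto simp: b_def)
    obtain n where n: "Lf U X n < b" using good_L[OF gX] by blast
    have inA: "Lf U X k \<in> A" if "N \<le> k" for k
      using connU[OF that] by (auto simp: A_def C0_def arcs_def blue_def)
    show False
    proof (cases "N \<le> n")
      case True then show False using inA[OF True] b n by force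
    next
      case False
      then have "Lf U X N \<le> Lf U X n" using Lf_mono[of n N U X] by auto
      then show False using inA[of N] b n by force
    qed
  qed
  show "\<exists>!C. C \<in> components_minus ?T K \<and> infinite C"
  proof (rule ex1I[of _ C0])
    show "C0 \<in> components_minus ?T K \<and> infinite C0" using C0inf x0S unfolding comps C0_def by blast
  next
    fix C assume C: "C \<in> components_minus ?T K \<and> infinite C"
    then obtain v where v: "v \<in> S" "C = R\<^sup>* `` {v}" unfolding comps by blast
    show "C = C0"
    proof (cases "(x0, v) \<in> R\<^sup>*")
      case True
      have vx: "(v, x0) \<in> R\<^sup>*" using rtr_sym[OF symR True] .
      show ?thesis unfolding v(2) C0_def using True vx by (auto intro: rtrancl_trans)
    next
      case False
      have "C \<subseteq> F"
      proof
        fix u assume "u \<in> C"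
        then have vu: "(v, u) \<in> R\<^sup>*" using v by auto
        then have uS: "u \<in> S" using rtr_in_S v(1) unfolding R_def by metis
        have "(x0, u) \<notin> R\<^sup>*"
        proof
          assume "(x0, u) \<in> R\<^sup>*"
          then have "(x0, v) \<in> R\<^sup>*" using rtr_sym[OF symR vu] by (meson rtrancl_trans)
          then show False using False by simp
        qed
        then show "u \<in> F" using cover[OF uS] by blast
      qed
      then show ?thesis using C fF finite_subset by blast
    qed
  qed
qed



abbreviation PP :: "(nat \<Rightarrow> letter) measure" where "PP \<equiv> PiM UNIV (\<lambda>_::nat. unif4)"

lemma unif4_eq: "unif4 = measure_pmf (pmf_of_set UNIV)"
proof -
  have "{LB, Lb, LR, Lr} = (UNIV :: letter set)" using letter.exhaust by auto
  then show ?thesis by (simp add: unif4_def)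
qed

lemma prob_unif4: "prob_space unif4" by (simp add: unif4_def prob_space_measure_pmf)

interpretation PS: product_prob_space "\<lambda>_::nat. unif4" UNIV
  by (simp add: product_prob_space_def product_sigma_finite_def prob_space_imp_sigma_finite prob_unif4 product_prob_space_axioms_def)

lemma sets_unif4[simp]: "sets unif4 = UNIV" by (simp add: unif4_def)
lemma space_unif4[simp]: "space unif4 = UNIV" by (simp add: unif4_def)

lemma meas_sumJ:
  assumes "\<And>k. k \<in> J \<Longrightarrow> (\<lambda>w. w k) \<in> M \<rightarrow>\<^sub>M unif4"
  shows "(\<lambda>w. real_of_int (\<Sum>k\<in>J. f (w k))) \<in> borel_measurable M"
proof -
  have "(\<lambda>w. real_of_int (f (w k))) \<in> borel_measurable M" if "k \<in> J" for k
  proof -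
    have "(\<lambda>l. real_of_int (f l)) \<in> unif4 \<rightarrow>\<^sub>M borel" by (simp add: unif4_def)
    from measurable_compose[OF assms[OF that] this] show ?thesis .
  qed
  then show ?thesis by (simp add: of_int_sum)
qed

lemma comp_meas_PP: "(\<lambda>w. w k) \<in> PP \<rightarrow>\<^sub>M unif4" by simp

lemma set_E_meas:
  assumes "\<And>k. k \<in> I \<Longrightarrow> (\<lambda>w. w k) \<in> M \<rightarrow>\<^sub>M unif4" and "\<And>m. g m \<subseteq> I" "\<And>m. finite (g m)"
  shows "{w \<in> space M. \<forall>a::int. \<exists>m::nat. (\<Sum>k\<in>g m. f (w k)) < a} \<in> sets M"
proof -
  have m: "(\<lambda>w. real_of_int (\<Sum>k\<in>g m. f (w k))) \<in> borel_measurable M" for m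
    using assms by (intro meas_sumJ) auto
  have "{w \<in> space M. (\<Sum>k\<in>g m. f (w k)) < a} \<in> sets M" for m a
  proof -
    have "{w \<in> space M. (\<Sum>k\<in>g m. f (w k)) < a} = {w \<in> space M. real_of_int (\<Sum>k\<in>g m. f (w k)) < real_of_int a}" by (simp only: of_int_less_iff)
    also have "\<dots> \<in> sets M" using m[of m] by measurable
    finally show ?thesis .
  qed
  then show ?thesis by measurable
qed


lemma prob_PP: "prob_space PP" by (rule prob_space_PiM) (rule prob_unif4)



definition Acoord :: "nat \<Rightarrow> (nat \<Rightarrow> letter) set set" where
  "Acoord k = sigma_sets (space PP) {(\<lambda>w. w k) -` X \<inter> space PP | X. X \<in> sets unif4}"

lemma indep_coords: "PS.indep_vars (\<lambda>_. unif4) (\<lambda>k w. w k) UNIV"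
proof -
  have rv: "\<And>i. (\<lambda>w. w i) \<in> PP \<rightarrow>\<^sub>M unif4" by simp
  have "(\<lambda>x. \<lambda>i\<in>UNIV. x i) = (\<lambda>x::nat\<Rightarrow>letter. x)" by (auto simp: restrict_def)
  then have "distr PP (PiM UNIV (\<lambda>_. unif4)) (\<lambda>x. \<lambda>i\<in>UNIV. x i) = PP" by simp
  moreover have "(PiM UNIV (\<lambda>i. distr PP unif4 (\<lambda>w. w i))) = PP"
    by (simp add: PS.PiM_component)
  ultimately show ?thesis by (subst PS.indep_vars_iff_distr_eq_PiM[OF _ rv]) auto
qed

lemma indep_Acoord: "PS.indep_sets Acoord UNIV"
  using indep_coords unfolding PS.indep_vars_def Acoord_def by simp

lemma sigma_Acoord: "sigma_algebra (space PP) (Acoord k)"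
  unfolding Acoord_def by (rule sigma_algebra_sigma_sets) auto

lemma tail_shift:
  fixes g :: "nat \<Rightarrow> int"
  shows "(\<forall>a. \<exists>m. (\<Sum>k<m. g k) < a) \<longleftrightarrow> (\<forall>a. \<exists>m. (\<Sum>k\<in>{n0..<m}. g k) < a)"
proof
  assume H: "\<forall>a. \<exists>m. (\<Sum>k<m. g k) < a"
  show "\<forall>a. \<exists>m. (\<Sum>k\<in>{n0..<m}. g k) < a"
  proof
    fix a
    define b where "b = min (a + (\<Sum>k<n0. g k)) (Min ((\<lambda>j. \<Sum>k<j. g k) ` {..n0}))"
    obtain m where m: "(\<Sum>k<m. g k) < b" using H by blast
    have "\<not> m \<le> n0"
    proof
      assume "m \<le> n0"
      then have "Min ((\<lambda>j. \<Sum>k<j. g k) ` {..n0}) \<le> (\<Sum>k<m. g k)" by (intro Min_le) auto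
      moreover have "b \<le> Min ((\<lambda>j. \<Sum>k<j. g k) ` {..n0})" unfolding b_def by (rule min.cobounded2)
      ultimately show False using m by linarith
    qed
    then have "{..<m} = {..<n0} \<union> {n0..<m}" "{..<n0} \<inter> {n0..<m} = {}" by auto
    then have "(\<Sum>k<m. g k) = (\<Sum>k<n0. g k) + (\<Sum>k\<in>{n0..<m}. g k)" by (metis finite_atLeastLessThan finite_lessThan sum.union_disjoint)
    then show "\<exists>m. (\<Sum>k\<in>{n0..<m}. g k) < a" using m by (intro exI[of _ m]) (simp add: b_def)
  qed
next
  assume H: "\<forall>a. \<exists>m. (\<Sum>k\<in>{n0..<m}. g k) < a"
  show "\<forall>a. \<exists>m. (\<Sum>k<m. g k) < a"
  proof
    fix a
    obtain m where m: "(\<Sum>k\<in>{n0..<m}. g k) < a - (\<Sum>k<n0. g k)" using H by blast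
    show "\<exists>m. (\<Sum>k<m. g k) < a"
    proof (cases "n0 \<le> m")
      case True
      then have "{..<m} = {..<n0} \<union> {n0..<m}" "{..<n0} \<inter> {n0..<m} = {}" by auto
      then have "(\<Sum>k<m. g k) = (\<Sum>k<n0. g k) + (\<Sum>k\<in>{n0..<m}. g k)" by (metis finite_atLeastLessThan finite_lessThan sum.union_disjoint)
      then show ?thesis using m by (intro exI[of _ m]) simp
    next
      case False
      then have "{n0..<m} = {}" by auto
      then show ?thesis using m by (intro exI[of _ n0]) simp
    qed
  qed
qed

definition Edn :: "(letter \<Rightarrow> int) \<Rightarrow> (nat \<Rightarrow> letter) set" where
  "Edn f = {w \<in> space PP. \<forall>a. \<exists>m. (\<Sum>k<m. f (w k)) < a}"

lemma Edn_sets: "Edn f \<in> sets PP"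
  unfolding Edn_def by (rule set_E_meas[where I=UNIV]) auto

lemma Edn_tail: "Edn f \<in> PS.tail_events Acoord"
  unfolding PS.tail_events_def
proof
  fix n0
  let ?G = "\<Union> (Acoord ` {n0..})"
  have Gsub: "?G \<subseteq> Pow (space PP)"
  proof -
    have "Acoord k \<subseteq> Pow (space PP)" for k
      unfolding Acoord_def by (auto dest: sigma_sets_into_sp[rotated])
    then show ?thesis by auto
  qed
  define Mn where "Mn = sigma (space PP) ?G"
  have spMn: "space Mn = space PP" using Gsub by (simp add: Mn_def space_measure_of_conv)
  have sMn: "sets Mn = sigma_sets (space PP) ?G" using Gsub by (simp add: Mn_def sets_measure_of)
  have mk: "(\<lambda>w. w k) \<in> Mn \<rightarrow>\<^sub>M unif4" if "k \<in> {n0..}" for k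
  proof (rule measurableI)
    fix X :: "letter set" assume "X \<in> sets unif4"
    have "(\<lambda>w. w k) -` X \<inter> space PP \<in> Acoord k" unfolding Acoord_def by (rule sigma_sets.Basic) auto
    then show "(\<lambda>w. w k) -` X \<inter> space Mn \<in> sets Mn" unfolding spMn sMn using that by blast
  qed simp
  have "{w \<in> space Mn. \<forall>a::int. \<exists>m::nat. (\<Sum>k\<in>{n0..<m}. f (w k)) < a} \<in> sets Mn"
    by (rule set_E_meas[where I="{n0..}" and g="\<lambda>m. {n0..<m}", OF mk]) auto
  moreover have "{w \<in> space Mn. \<forall>a::int. \<exists>m::nat. (\<Sum>k\<in>{n0..<m}. f (w k)) < a} = Edn f"
    unfolding spMn Edn_def
  proof (intro Collect_cong conj_cong refl)
    fix w :: "nat \<Rightarrow> letter"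
    show "(\<forall>a::int. \<exists>m::nat. (\<Sum>k\<in>{n0..<m}. f (w k)) < a) = (\<forall>a. \<exists>m. (\<Sum>k<m. f (w k)) < a)"
      using tail_shift[of "\<lambda>k. f (w k)" n0] by simp
  qed
  ultimately show "Edn f \<in> sigma_sets (space PP) ?G" using sMn by simp
qed

lemma Edn_01: "PS.prob (Edn f) = 0 \<or> PS.prob (Edn f) = 1"
  by (rule PS.kolmogorov_0_1_law[OF sigma_Acoord indep_Acoord Edn_tail])


lemma card_letter: "card (UNIV :: letter set) = 4"
proof -
  have eq: "(UNIV :: letter set) = {LB, Lb, LR, Lr}" using letter.exhaust by auto
  have "card {LB, Lb, LR, Lr} = 4" by simp
  then show ?thesis using eq by metis
qed

lemma finite_letter: "finite (UNIV :: letter set)"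
  using card_letter card.infinite by fastforce

lemma measure_unif4_single: "measure unif4 {p} = 1/4"
  unfolding unif4_eq by (subst measure_pmf_of_set) (auto simp: finite_letter card_letter)

lemma emeasure_unif4_inv:
  assumes inv: "\<And>x. \<sigma> (\<sigma> x) = x"
  shows "emeasure unif4 (\<sigma> -` A) = emeasure unif4 A"
proof -
  have inj: "inj \<sigma>" by (metis inv injI)
  have "\<sigma> -` A = \<sigma> ` A" using inv by (auto simp: image_def) (metis inv)
  then have "card (\<sigma> -` A) = card A" using card_image[OF inj_on_subset[OF inj]] by auto
  then show ?thesis unfolding unif4_eq
    by (subst (1 2) emeasure_pmf_of_set) (auto simp: finite_letter)
qed

lemma swap_meas: "(\<lambda>w i. \<sigma> (w i)) \<in> PP \<rightarrow>\<^sub>M PP"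
proof (rule measurable_PiM_single')
  fix i :: nat
  have "\<sigma> \<in> unif4 \<rightarrow>\<^sub>M unif4" by (simp add: unif4_def)
  then show "(\<lambda>w. \<sigma> (w i)) \<in> PP \<rightarrow>\<^sub>M unif4" using measurable_compose[OF comp_meas_PP] by blast
qed (auto simp: space_PiM)

lemma distr_swap:
  assumes inv: "\<And>x. \<sigma> (\<sigma> x) = x"
  shows "distr PP PP (\<lambda>w i. \<sigma> (w i)) = PP"
proof (rule PS.PiM_eq)
  show "sets (distr PP PP (\<lambda>w i. \<sigma> (w i))) = sets PP" by simp
next
  fix J :: "nat set" and F assume J: "finite J" "J \<subseteq> UNIV" and F: "\<And>j. j \<in> J \<Longrightarrow> F j \<in> sets unif4"
  have e: "(\<lambda>w i. \<sigma> (w i)) -` prod_emb UNIV (\<lambda>_. unif4) J (Pi\<^sub>E J F) \<inter> space PP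
      = prod_emb UNIV (\<lambda>_. unif4) J (Pi\<^sub>E J (\<lambda>j. \<sigma> -` F j))"
    by (auto simp: prod_emb_def space_PiM PiE_def Pi_def extensional_def)
  have "emeasure (distr PP PP (\<lambda>w i. \<sigma> (w i))) (prod_emb UNIV (\<lambda>_. unif4) J (Pi\<^sub>E J F))
      = emeasure PP ((\<lambda>w i. \<sigma> (w i)) -` prod_emb UNIV (\<lambda>_. unif4) J (Pi\<^sub>E J F) \<inter> space PP)"
    by (rule emeasure_distr[OF swap_meas]) (auto intro!: sets_PiM_I_finite J)
  also have "\<dots> = (\<Prod>j\<in>J. emeasure unif4 (\<sigma> -` F j))"
    unfolding e by (rule PS.emeasure_PiM_emb) (auto simp: J)
  also have "\<dots> = (\<Prod>j\<in>J. emeasure unif4 (F j))"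
    using emeasure_unif4_inv[OF inv] by simp
  finally show "emeasure (distr PP PP (\<lambda>w i. \<sigma> (w i))) (prod_emb UNIV (\<lambda>_. unif4) J (Pi\<^sub>E J F)) = (\<Prod>j\<in>J. emeasure unif4 (F j))" .
qed

lemma Edn_swap:
  assumes inv: "\<And>x. \<sigma> (\<sigma> x) = x"
  shows "measure PP (Edn f) = measure PP (Edn (\<lambda>x. f (\<sigma> x)))"
proof -
  have "measure PP (Edn f) = measure (distr PP PP (\<lambda>w i. \<sigma> (w i))) (Edn f)" using distr_swap[OF inv] by simp
  also have "\<dots> = measure PP ((\<lambda>w i. \<sigma> (w i)) -` Edn f \<inter> space PP)"
    by (rule measure_distr[OF swap_meas Edn_sets])
  also have "(\<lambda>w i. \<sigma> (w i)) -` Edn f \<inter> space PP = Edn (\<lambda>x. f (\<sigma> x))"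
    by (auto simp: Edn_def space_PiM)
  finally show ?thesis .
qed


definition blk :: "nat \<Rightarrow> nat \<Rightarrow> nat set" where "blk l k = {k*l..<k*l+l}"
definition Eb :: "letter \<Rightarrow> nat \<Rightarrow> nat \<Rightarrow> (nat \<Rightarrow> letter) set" where
  "Eb p l k = {w \<in> space PP. \<forall>i\<in>blk l k. w i \<in> {p}}"

lemma collect_sets: "{w \<in> space PP. \<forall>i\<in>B. w i \<in> {p}} \<in> sets PP" if "finite B"
proof (rule sets.sets_Collect_finite_All[OF _ that])
  fix i
  have "(\<lambda>w. w i) -` {p} \<inter> space PP \<in> sets PP" by (rule measurable_sets[OF comp_meas_PP]) simp
  moreover have "(\<lambda>w. w i) -` {p} \<inter> space PP = {w \<in> space PP. w i \<in> {p}}" by auto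
  ultimately show "{w \<in> space PP. w i \<in> {p}} \<in> sets PP" by simp
qed

lemma meas_collect: assumes "finite B" shows "measure PP {w \<in> space PP. \<forall>i\<in>B. w i \<in> {p}} = (1/4) ^ card B"
proof -
  have u: "emeasure unif4 {p} = ennreal (1/4)"
    using measure_unif4_single[of p] by (simp add: unif4_def measure_pmf.emeasure_eq_measure)
  have "emeasure PP {w \<in> space PP. \<forall>i\<in>B. w i \<in> {p}} = (\<Prod>i\<in>B. emeasure unif4 {p})"
    using PS.emeasure_PiM_Collect[of B "\<lambda>_. {p}"] assms by simp
  also have "\<dots> = ennreal ((1/4) ^ card B)" using u by (simp add: ennreal_power)
  finally show ?thesis by (simp add: measure_def)
qed

lemma Eb_sets: "Eb p l k \<in> sets PP" unfolding Eb_def blk_def by (rule collect_sets) simp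

lemma blk_disj: assumes "j \<noteq> j'" shows "blk l j \<inter> blk l j' = {}"
proof -
  have *: "blk l a \<inter> blk l b = {}" if "a < b" for a b
  proof -
    have "Suc a * l \<le> b * l" using that by (intro mult_le_mono1) simp
    then show ?thesis by (auto simp: blk_def)
  qed
  show ?thesis using assms *[of j j'] *[of j' j] by (cases "j < j'") auto
qed

lemma measure_Eb: "measure PP (Eb p l k) = (1/4)^l"
  unfolding Eb_def by (subst meas_collect) (auto simp: blk_def)

lemma indep_Eb: "PS.P.indep_events (Eb p l) UNIV"
  unfolding PS.P.indep_events_def
proof (intro conjI allI impI)
  show "Eb p l ` UNIV \<subseteq> sets PP" using Eb_sets by auto
next
  fix J :: "nat set" assume J: "J \<subseteq> UNIV" "J \<noteq> {}" "finite J"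
  have eq: "(\<Inter>j\<in>J. Eb p l j) = {w \<in> space PP. \<forall>i\<in>(\<Union>j\<in>J. blk l j). w i \<in> {p}}"
    using J(2) by (auto simp: Eb_def)
  have dj: "\<forall>i\<in>J. \<forall>j\<in>J. i \<noteq> j \<longrightarrow> blk l i \<inter> blk l j = {}" using blk_disj by blast
  have c: "card (\<Union>j\<in>J. blk l j) = card J * l"
    using card_UN_disjoint[OF J(3) _ dj] by (simp add: blk_def)
  have "measure PP (\<Inter>j\<in>J. Eb p l j) = (1/4) ^ (card J * l)"
    unfolding eq using J(3) c by (subst meas_collect) (auto simp: blk_def)
  also have "\<dots> = (\<Prod>j\<in>J. (1/4::real)^l)" by (simp add: power_mult[symmetric] mult.commute)
  also have "\<dots> = (\<Prod>j\<in>J. measure PP (Eb p l j))" by (rule prod.cong) (simp_all add: measure_Eb)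
  finally show "measure PP (\<Inter>j\<in>J. Eb p l j) = (\<Prod>j\<in>J. measure PP (Eb p l j))" .
qed

lemma prob_no_block:
  "measure PP (\<Inter>k\<in>{..<Suc K}. space PP - Eb p l k) = (1 - (1/4)^l) ^ Suc K"
proof -
  have ind: "PS.P.indep_sets (\<lambda>k. sigma_sets (space PP) {Eb p l k}) UNIV"
    by (rule PS.P.indep_sets_sigma) (use indep_Eb[of p l] in \<open>auto simp: PS.P.indep_events_def_alt Int_stable_def\<close>)
  have "measure PP (\<Inter>k\<in>{..<Suc K}. space PP - Eb p l k) = (\<Prod>k\<in>{..<Suc K}. measure PP (space PP - Eb p l k))"
    by (rule PS.P.indep_setsD[OF ind]) (auto intro: sigma_sets.Compl sigma_sets.Basic)
  also have "\<dots> = (\<Prod>k\<in>{..<Suc K}. 1 - (1/4)^l)"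
  proof (rule prod.cong)
    fix k
    have "measure PP (Eb p l k) = (1/4)^l" unfolding Eb_def by (subst meas_collect) (auto simp: blk_def)
    then show "measure PP (space PP - Eb p l k) = 1 - (1/4)^l" using PS.P.prob_compl[OF Eb_sets] by simp
  qed simp
  finally show ?thesis by simp
qed

lemma sum_shift: fixes g :: "nat \<Rightarrow> 'a::comm_monoid_add" shows "(\<Sum>k<a+b. g k) = (\<Sum>k<a. g k) + (\<Sum>i<b. g (a+i))"
  by (induct b) (simp_all add: add.assoc)

lemma Bd_not_Eb:
  assumes fp: "f p = 1" and B: "\<forall>m. \<bar>\<Sum>k<m. f (w k)\<bar> \<le> int c"
  shows "w \<notin> Eb p (2*c+1) k"
proof
  assume "w \<in> Eb p (2*c+1) k"
  then have wp: "w i = p" if "i \<in> {k*(2*c+1)..<k*(2*c+1)+(2*c+1)}" for i using that by (auto simp: Eb_def blk_def)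
  let ?a = "k*(2*c+1)" and ?l = "2*c+1"
  have "(\<Sum>i<?l. f (w (?a+i))) = (\<Sum>i<?l. 1)" using wp fp by (intro sum.cong) auto
  then have "(\<Sum>k<?a+?l. f (w k)) = (\<Sum>k<?a. f (w k)) + int ?l" by (simp add: sum_shift)
  moreover have "\<bar>\<Sum>k<?a+?l. f (w k)\<bar> \<le> int c" "\<bar>\<Sum>k<?a. f (w k)\<bar> \<le> int c" by (rule B[rule_format])+
  ultimately show False by linarith
qed

definition Nn :: "letter \<Rightarrow> nat \<Rightarrow> (nat \<Rightarrow> letter) set" where
  "Nn p c = (\<Inter>K. \<Inter>k\<in>{..<Suc K}. space PP - Eb p (2*c+1) k)"

lemma Nn_null: "Nn p c \<in> null_sets PP"
proof -
  have s: "Nn p c \<in> sets PP" unfolding Nn_def using Eb_sets by blast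
  let ?q = "1 - (1/4::real)^(2*c+1)"
  have le: "measure PP (Nn p c) \<le> ?q ^ Suc K" for K
  proof -
    have "Nn p c \<subseteq> (\<Inter>k\<in>{..<Suc K}. space PP - Eb p (2*c+1) k)" unfolding Nn_def by blast
    then have "measure PP (Nn p c) \<le> measure PP (\<Inter>k\<in>{..<Suc K}. space PP - Eb p (2*c+1) k)"
      using Eb_sets by (intro PS.P.finite_measure_mono) auto
    then show ?thesis using prob_no_block by simp
  qed
  have q: "norm ?q < 1"
  proof -
    have "0 < (1/4::real)^(2*c+1)" by simp
    moreover have "(1/4::real)^(2*c+1) \<le> 1" by (rule power_le_one) auto
    ultimately show ?thesis by simp
  qed
  have "(\<lambda>K. ?q ^ Suc K) \<longlonglongrightarrow> 0" using LIMSEQ_power_zero[OF q] by (rule LIMSEQ_Suc)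
  then have "measure PP (Nn p c) \<le> 0" by (rule LIMSEQ_le_const) (use le in auto)
  then have "measure PP (Nn p c) = 0" using measure_nonneg[of PP] by (metis antisym)
  then show ?thesis using s by (simp add: PS.P.emeasure_eq_measure null_sets_def)
qed

lemma AE_unbounded: assumes fp: "f p = 1"
  shows "AE w in PP. w \<in> Edn f \<or> w \<in> Edn (\<lambda>x. - f x)"
proof (rule AE_I')
  show "(\<Union>c. Nn p c) \<in> null_sets PP" using Nn_null by blast
  show "{w \<in> space PP. \<not> (w \<in> Edn f \<or> w \<in> Edn (\<lambda>x. - f x))} \<subseteq> (\<Union>c. Nn p c)"
  proof
    fix w assume w: "w \<in> {w \<in> space PP. \<not> (w \<in> Edn f \<or> w \<in> Edn (\<lambda>x. - f x))}"
    then obtain a b where a: "\<forall>m. a \<le> (\<Sum>k<m. f (w k))" and b: "\<forall>m. b \<le> (\<Sum>k<m. - f (w k))"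
      by (auto simp: Edn_def not_less)
    define c where "c = nat (\<bar>a\<bar> + \<bar>b\<bar>)"
    have B: "\<forall>m. \<bar>\<Sum>k<m. f (w k)\<bar> \<le> int c"
    proof
      fix m
      have "b \<le> - (\<Sum>k<m. f (w k))" using b[rule_format, of m] by (simp add: sum_negf)
      then show "\<bar>\<Sum>k<m. f (w k)\<bar> \<le> int c" using a[rule_format, of m] by (simp add: c_def)
    qed
    have "w \<in> Nn p c" using Bd_not_Eb[OF fp B] w unfolding Nn_def by auto
    then show "w \<in> (\<Union>c. Nn p c)" by blast
  qed
qed

lemma AE_Edn:
  assumes fp: "f p = 1" and inv: "\<And>x. \<sigma> (\<sigma> x) = x" and anti: "\<And>x. f (\<sigma> x) = - f x"
  shows "AE w in PP. w \<in> Edn f"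
proof -
  let ?t = "measure PP (Edn f)"
  have eqt: "measure PP (Edn (\<lambda>x. - f x)) = ?t" using Edn_swap[OF inv, of f] anti by simp
  have u: "Edn f \<union> Edn (\<lambda>x. - f x) \<in> sets PP" using Edn_sets by blast
  have "measure PP (Edn f \<union> Edn (\<lambda>x. - f x)) = 1"
    using AE_unbounded[of f p, OF fp] PS.P.prob_eq_1[OF u] by simp
  moreover have "measure PP (Edn f \<union> Edn (\<lambda>x. - f x)) \<le> ?t + measure PP (Edn (\<lambda>x. - f x))"
    by (rule measure_Un_le) (rule Edn_sets)+
  ultimately have "1 \<le> 2 * ?t" using eqt by simp
  then have "?t = 1" using Edn_01[of f] by auto
  then show ?thesis using PS.P.prob_eq_1[OF Edn_sets] by simp
qed



lemma AE_goodw: "AE w in PP. goodw w"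
proof -
  have 1: "AE w in PP. w \<in> Edn fb"
    by (rule AE_Edn[of fb LB "\<lambda>x. case x of LB \<Rightarrow> Lb | Lb \<Rightarrow> LB | y \<Rightarrow> y"])
       (auto split: letter.splits)
  have 2: "AE w in PP. w \<in> Edn fr"
    by (rule AE_Edn[of fr LR "\<lambda>x. case x of LR \<Rightarrow> Lr | Lr \<Rightarrow> LR | y \<Rightarrow> y"])
       (auto split: letter.splits)
  show ?thesis using 1 2 by eventually_elim (auto simp: goodw_def Edn_def)
qed

lemma sfPP: "sigma_finite_measure PP"
  by (simp add: prob_space_imp_sigma_finite prob_PP)

lemma AE_pair_fst: assumes "AE w in PP. P w" shows "AE z in PP \<Otimes>\<^sub>M PP. P (fst z)"
proof -
  from assms obtain N where N: "{w \<in> space PP. \<not> P w} \<subseteq> N" "emeasure PP N = 0" "N \<in> sets PP"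
    by (auto elim!: AE_E)
  have "emeasure (PP \<Otimes>\<^sub>M PP) (N \<times> space PP) = emeasure PP N * emeasure PP (space PP)"
    by (rule sigma_finite_measure.emeasure_pair_measure_Times[OF sfPP N(3)]) simp
  then have "N \<times> space PP \<in> null_sets (PP \<Otimes>\<^sub>M PP)" using N by (simp add: null_sets_def)
  then show ?thesis by (rule AE_I') (use N in \<open>auto simp: space_pair_measure\<close>)
qed

lemma AE_pair_snd: assumes "AE w in PP. P w" shows "AE z in PP \<Otimes>\<^sub>M PP. P (snd z)"
proof -
  from assms obtain N where N: "{w \<in> space PP. \<not> P w} \<subseteq> N" "emeasure PP N = 0" "N \<in> sets PP"
    by (auto elim!: AE_E)
  have "emeasure (PP \<Otimes>\<^sub>M PP) (space PP \<times> N) = emeasure PP (space PP) * emeasure PP N"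
    by (rule sigma_finite_measure.emeasure_pair_measure_Times[OF sfPP _ N(3)]) simp
  then have "space PP \<times> N \<in> null_sets (PP \<Otimes>\<^sub>M PP)" using N by (simp add: null_sets_def)
  then show ?thesis by (rule AE_I') (use N in \<open>auto simp: space_pair_measure\<close>)
qed

theorem mainTheorem14:
  shows "AE \<omega> in (PiM UNIV (\<lambda>_::nat. unif4)) \<Otimes>\<^sub>M (PiM UNIV (\<lambda>_::nat. unif4)).
     (\<forall>r. \<exists>M. \<forall>m\<ge>M. comb_ball (glued (fst \<omega>) (snd \<omega>) m) r = comb_ball (glued (fst \<omega>) (snd \<omega>) M) r
                     \<and> comb_ball (glued (fst \<omega>) (snd \<omega>) m) r = comb_ball (glued_lim (fst \<omega>) (snd \<omega>)) r)
     \<and> locally_finite (glued_lim (fst \<omega>) (snd \<omega>))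
     \<and> one_ended (glued_lim (fst \<omega>) (snd \<omega>))"
proof -
  have "AE z in PP \<Otimes>\<^sub>M PP. goodw (fst z)" by (rule AE_pair_fst[OF AE_goodw])
  moreover have "AE z in PP \<Otimes>\<^sub>M PP. goodw (snd z)" by (rule AE_pair_snd[OF AE_goodw])
  ultimately show ?thesis
    by eventually_elim (use balls_ok lf_lim one_ended_lim in blast)
qed


end
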